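(* Assume (F1)–(F3) and let $f_0\in C^1([0,1])$ be non-increasing with $f_0(w)\le f(w)$ for $0\le w\le1$, $f_0(0)>1$, $f_0(1)=0$, and such that $1-w=f_0(w)$ has exactly one solution in $(0,1)$. Let $c^{(0)}$ be the unique value of $c$ for which the non-delayed problem $w''+cw'+w(1-w-f_0(w))=0$, $w(-\infty)=1$, $w(+\infty)=0$ has a solution. If, for some $\tau\ge0$ and some $c>0$, problem (P) has a monotonically decreasing solution, then $c\le c^{(0)}$.
   Context: $f:\mathbb R\to\mathbb R$ is $C^4$ with bounded derivatives and satisfies: (F1) $f(w)>0$ for $0\le w<1$, $f(1)=0$, $f'(1)>-1$; (F2) $f(0)>1$, $f'(0)>0$, and $f(w)>1$ for $0\le w<w_*$ for some $w_*\in(0,1)$; (F3) the equation $f(w)=1-w$ has exactly one solution $w_0$ in $(0,1)$, and $f'(w_0)<-1$. Problem (P) for given $\tau\ge0$, $c\in\mathbb R$: find $w\in C^2(\mathbb R)$ with $w''(x)+cw'(x)+w(x)\big(1-w(x)-f(w(x+c\tau))\big)=0$ for all $x$, and $w(-\infty)=1$, $w(+\infty)=0$. *)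

theory Defs
  imports "HOL-Analysis.Analysis"
begin

definition C2_real :: "(real \<Rightarrow> real) \<Rightarrow> bool" where
  "C2_real w \<longleftrightarrow> w differentiable_on UNIV \<and> (deriv w) differentiable_on UNIV
     \<and> continuous_on UNIV (deriv (deriv w))"

definition C4_bounded_derivs :: "(real \<Rightarrow> real) \<Rightarrow> bool" where
  "C4_bounded_derivs f \<longleftrightarrow>
     (\<forall>k<4. ((deriv ^^ k) f) differentiable_on UNIV) \<and>
     continuous_on UNIV ((deriv ^^ 4) f) \<and>
     (\<forall>k\<in>{1..4::nat}. bounded (range ((deriv ^^ k) f)))"

definition F1 :: "(real \<Rightarrow> real) \<Rightarrow> bool" where
  "F1 f \<longleftrightarrow> (\<forall>w. 0 \<le> w \<and> w < 1 \<longrightarrow> f w > 0) \<and> f 1 = 0 \<and> deriv f 1 > -1"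

definition F2 :: "(real \<Rightarrow> real) \<Rightarrow> bool" where
  "F2 f \<longleftrightarrow> f 0 > 1 \<and> deriv f 0 > 0 \<and>
     (\<exists>ws. 0 < ws \<and> ws < 1 \<and> (\<forall>w. 0 \<le> w \<and> w < ws \<longrightarrow> f w > 1))"

definition F3 :: "(real \<Rightarrow> real) \<Rightarrow> bool" where
  "F3 f \<longleftrightarrow> (\<exists>!w0. 0 < w0 \<and> w0 < 1 \<and> f w0 = 1 - w0) \<and>
     (\<forall>w0. 0 < w0 \<and> w0 < 1 \<and> f w0 = 1 - w0 \<longrightarrow> deriv f w0 < -1)"

definition solves_P :: "(real \<Rightarrow> real) \<Rightarrow> real \<Rightarrow> real \<Rightarrow> (real \<Rightarrow> real) \<Rightarrow> bool" where
  "solves_P f \<tau> c w \<longleftrightarrow> C2_real w \<and>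
     (\<forall>x. deriv (deriv w) x + c * deriv w x + w x * (1 - w x - f (w (x + c * \<tau>))) = 0) \<and>
     (w \<longlongrightarrow> 1) at_bot \<and> (w \<longlongrightarrow> 0) at_top"

text \<open>w solves the non-delayed problem with nonlinearity f0 (defined on [0,1]) and speed c;
  since f0 is only given on [0,1], solutions are required to take values in [0,1].\<close>
definition solves_nondelayed :: "(real \<Rightarrow> real) \<Rightarrow> real \<Rightarrow> (real \<Rightarrow> real) \<Rightarrow> bool" where
  "solves_nondelayed f0 c w \<longleftrightarrow> C2_real w \<and> (\<forall>x. 0 \<le> w x \<and> w x \<le> 1) \<and>
     (\<forall>x. deriv (deriv w) x + c * deriv w x + w x * (1 - w x - f0 (w x)) = 0) \<and>
     (w \<longlongrightarrow> 1) at_bot \<and> (w \<longlongrightarrow> 0) at_top"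

definition C1_on_unit :: "(real \<Rightarrow> real) \<Rightarrow> bool" where
  "C1_on_unit f0 \<longleftrightarrow> (\<exists>f0'. (\<forall>x\<in>{0..1}. (f0 has_real_derivative f0' x) (at x within {0..1}))
      \<and> continuous_on {0..1} f0')"

end

theory Submission
  imports Defs
begin



lemma max_second:
  fixes d d1 d2 :: "real \<Rightarrow> real"
  assumes D: "\<And>x. (d has_real_derivative d1 x) (at x)"
    and D1: "\<And>x. (d1 has_real_derivative d2 x) (at x)"
    and e: "e > 0" and mx: "\<And>y. \<bar>x0 - y\<bar> < e \<Longrightarrow> d y \<le> d x0"
  shows "d1 x0 = 0 \<and> d2 x0 \<le> 0"
proof -
  have z: "d1 x0 = 0" using DERIV_local_max[OF D e] mx by blast
  moreover have "d2 x0 \<le> 0"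
  proof (rule ccontr)
    assume "\<not> d2 x0 \<le> 0"
    then have "d2 x0 > 0" by simp
    from DERIV_pos_inc_right[OF D1 this] obtain \<delta> where \<delta>: "\<delta> > 0"
      "\<And>h. h > 0 \<Longrightarrow> h < \<delta> \<Longrightarrow> d1 x0 < d1 (x0 + h)" by blast
    define h where "h = min e \<delta> / 2"
    have h: "h > 0" "h < e" "h < \<delta>" using e \<delta> by (auto simp: h_def)
    have "\<exists>l z. x0 < z \<and> z < x0 + h \<and> DERIV d z :> l \<and> d (x0 + h) - d x0 = (x0 + h - x0) * l"
    proof (rule MVT)
      show "x0 < x0 + h" using h by simp
      show "continuous_on {x0..x0 + h} d"
        by (rule continuous_at_imp_continuous_on) (use D DERIV_isCont in blast)
      show "\<And>x. x0 < x \<Longrightarrow> x < x0 + h \<Longrightarrow> d differentiable at x"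
        using D real_differentiable_def by blast
    qed
    then obtain l zz where zz: "x0 < zz" "zz < x0 + h" "DERIV d zz :> l" "d (x0 + h) - d x0 = h * l"
      by auto
    have "l = d1 zz" using DERIV_unique[OF zz(3) D] .
    moreover have "d1 zz > 0" using \<delta>(2)[of "zz - x0"] zz h z by auto
    ultimately have "d (x0 + h) > d x0" using zz(4) h by (metis diff_gt_0_iff_gt mult_pos_pos)
    moreover have "d (x0 + h) \<le> d x0" using mx[of "x0 + h"] h by auto
    ultimately show False by simp
  qed
  ultimately show ?thesis by simp
qed

lemma MP_right:
  fixes u u1 u2 v v1 v2 g :: "real \<Rightarrow> real" and c0 a :: real
  assumes Du: "\<And>x. (u has_real_derivative u1 x) (at x)" "\<And>x. (u1 has_real_derivative u2 x) (at x)"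
    and Dv: "\<And>x. (v has_real_derivative v1 x) (at x)" "\<And>x. (v1 has_real_derivative v2 x) (at x)"
    and Lu: "\<And>x. x \<ge> a \<Longrightarrow> u2 x + c0 * u1 x + g (u x) \<ge> 0"
    and Lv: "\<And>x. v2 x + c0 * v1 x + g (v x) = 0"
    and ba: "u a \<le> v a" and lim: "((\<lambda>x. u x - v x) \<longlongrightarrow> 0) at_top"
    and zone: "\<And>x. x \<ge> a \<Longrightarrow> u x > v x \<Longrightarrow> g (u x) < g (v x)"
  shows "\<And>x. x \<ge> a \<Longrightarrow> u x \<le> v x"
proof (rule ccontr)
  fix x1 assume x1: "x1 \<ge> a" "\<not> u x1 \<le> v x1"
  define d where "d = (\<lambda>x. u x - v x)"
  have pos: "d x1 > 0" using x1 by (simp add: d_def)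
  have Dd: "\<And>x. (d has_real_derivative (u1 x - v1 x)) (at x)"
    unfolding d_def using Du(1) Dv(1) by (intro derivative_intros) auto
  have Dd1: "\<And>x. ((\<lambda>x. u1 x - v1 x) has_real_derivative (u2 x - v2 x)) (at x)"
    using Du(2) Dv(2) by (intro derivative_intros) auto
  have cont: "continuous_on UNIV d"
    by (rule continuous_at_imp_continuous_on) (use Dd DERIV_isCont in blast)
  have "\<forall>\<^sub>F x in at_top. dist (d x) 0 < d x1"
    using lim pos unfolding d_def tendsto_iff by blast
  then obtain B where B0: "\<forall>x\<ge>B. \<bar>d x\<bar> < d x1"
    unfolding eventually_at_top_linorder dist_real_def by auto
  have B: "\<And>x. x \<ge> B \<Longrightarrow> d x < d x1" using B0 by fastforce
  obtain x0 where x0: "x0 \<in> {a..max B x1}" "\<And>y. y \<in> {a..max B x1} \<Longrightarrow> d y \<le> d x0"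
  proof -
    have "{a..max B x1} \<noteq> {}" using x1(1) by auto
    moreover have "continuous_on {a..max B x1} d" using cont continuous_on_subset by blast
    ultimately show ?thesis using continuous_attains_sup[of "{a..max B x1}" d] that by blast
  qed
  have ge: "d x0 \<ge> d x1" using x0 x1 by auto
  have all: "\<And>y. y \<ge> a \<Longrightarrow> d y \<le> d x0"
  proof -
    fix y assume "y \<ge> a"
    show "d y \<le> d x0"
    proof (cases "y \<le> max B x1")
      case True then show ?thesis using x0 \<open>y \<ge> a\<close> by auto
    next
      case False then have "d y < d x1" by (intro B) auto
      then show ?thesis using ge by linarith
    qed
  qed
  have "x0 \<noteq> a" using ba ge pos by (auto simp: d_def)
  then have x0a: "x0 > a" using x0 by auto
  have "(\<lambda>x. u1 x - v1 x) x0 = 0 \<and> (u2 x0 - v2 x0) \<le> 0"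
    by (rule max_second[OF Dd Dd1, of "x0 - a"]) (use x0a all in auto)
  then have "g (u x0) - g (v x0) \<ge> 0" using Lu[of x0] Lv[of x0] x0a
    by (smt (verit, ccfv_SIG) mult_eq_0_iff right_diff_distrib)
  moreover have "u x0 > v x0" using ge pos by (simp add: d_def)
  ultimately show False using zone[of x0] x0a by auto
qed

lemma MP_left:
  fixes u u1 u2 v v1 v2 g :: "real \<Rightarrow> real" and c0 a :: real
  assumes Du: "\<And>x. (u has_real_derivative u1 x) (at x)" "\<And>x. (u1 has_real_derivative u2 x) (at x)"
    and Dv: "\<And>x. (v has_real_derivative v1 x) (at x)" "\<And>x. (v1 has_real_derivative v2 x) (at x)"
    and Lu: "\<And>x. x \<le> a \<Longrightarrow> u2 x + c0 * u1 x + g (u x) \<ge> 0"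
    and Lv: "\<And>x. v2 x + c0 * v1 x + g (v x) = 0"
    and ba: "u a \<le> v a" and lim: "((\<lambda>x. u x - v x) \<longlongrightarrow> 0) at_bot"
    and zone: "\<And>x. x \<le> a \<Longrightarrow> u x > v x \<Longrightarrow> g (u x) < g (v x)"
  shows "\<And>x. x \<le> a \<Longrightarrow> u x \<le> v x"
proof (rule ccontr)
  fix x1 assume x1: "x1 \<le> a" "\<not> u x1 \<le> v x1"
  define d where "d = (\<lambda>x. u x - v x)"
  have pos: "d x1 > 0" using x1 by (simp add: d_def)
  have Dd: "\<And>x. (d has_real_derivative (u1 x - v1 x)) (at x)"
    unfolding d_def using Du(1) Dv(1) by (intro derivative_intros) auto
  have Dd1: "\<And>x. ((\<lambda>x. u1 x - v1 x) has_real_derivative (u2 x - v2 x)) (at x)"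
    using Du(2) Dv(2) by (intro derivative_intros) auto
  have cont: "continuous_on UNIV d"
    by (rule continuous_at_imp_continuous_on) (use Dd DERIV_isCont in blast)
  have "\<forall>\<^sub>F x in at_bot. dist (d x) 0 < d x1"
    using lim pos unfolding d_def tendsto_iff by blast
  then obtain B where B0: "\<forall>x\<le>B. \<bar>d x\<bar> < d x1"
    unfolding eventually_at_bot_linorder dist_real_def by auto
  have B: "\<And>x. x \<le> B \<Longrightarrow> d x < d x1" using B0 by fastforce
  obtain x0 where x0: "x0 \<in> {min B x1..a}" "\<And>y. y \<in> {min B x1..a} \<Longrightarrow> d y \<le> d x0"
  proof -
    have "{min B x1..a} \<noteq> {}" using x1(1) by auto
    moreover have "continuous_on {min B x1..a} d" using cont continuous_on_subset by blast
    ultimately show ?thesis using continuous_attains_sup[of "{min B x1..a}" d] that by blast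
  qed
  have ge: "d x0 \<ge> d x1" using x0 x1 by auto
  have all: "\<And>y. y \<le> a \<Longrightarrow> d y \<le> d x0"
  proof -
    fix y assume "y \<le> a"
    show "d y \<le> d x0"
    proof (cases "y \<ge> min B x1")
      case True then show ?thesis using x0 \<open>y \<le> a\<close> by auto
    next
      case False then have "d y < d x1" by (intro B) auto
      then show ?thesis using ge by linarith
    qed
  qed
  have "x0 \<noteq> a" using ba ge pos by (auto simp: d_def)
  then have x0a: "x0 < a" using x0 by auto
  have "(\<lambda>x. u1 x - v1 x) x0 = 0 \<and> (u2 x0 - v2 x0) \<le> 0"
    by (rule max_second[OF Dd Dd1, of "a - x0"]) (use x0a all in auto)
  then have "g (u x0) - g (v x0) \<ge> 0" using Lu[of x0] Lv[of x0] x0a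
    by (smt (verit, ccfv_SIG) mult_eq_0_iff right_diff_distrib)
  moreover have "u x0 > v x0" using ge pos by (simp add: d_def)
  ultimately show False using zone[of x0] x0a by auto
qed



lemma ode_const:
  fixes v v1 v2 g :: "real \<Rightarrow> real" and c0 L e x0 :: real
  assumes Dv: "\<And>x. (v has_real_derivative v1 x) (at x)" "\<And>x. (v1 has_real_derivative v2 x) (at x)"
    and Lv: "\<And>x. v2 x + c0 * v1 x + g (v x) = 0"
    and Lip: "\<And>x. \<bar>g (v x) - g e\<bar> \<le> L * \<bar>v x - e\<bar>" and L: "L \<ge> 0"
    and ge: "g e = 0" and v0: "v x0 = e" "v1 x0 = 0"
  shows "v x = e"
proof -
  define E where "E = (\<lambda>x. (v x - e)^2 + (v1 x)^2)"
  define E' where "E' = (\<lambda>x. 2 * (v x - e) * v1 x + 2 * v1 x * v2 x)"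
  define K where "K = 1 + L + 2 * \<bar>c0\<bar>"
  have DE: "\<And>x. (E has_real_derivative E' x) (at x)"
    unfolding E_def E'_def using Dv by (auto intro!: derivative_eq_intros)
  have E0: "E x0 = 0" using v0 by (simp add: E_def)
  have Enn: "\<And>x. E x \<ge> 0" by (simp add: E_def)
  have bound: "\<bar>E' x\<bar> \<le> K * E x" for x
  proof -
    define a where "a = v x - e"
    define b where "b = v1 x"
    have v2: "v2 x = - c0 * b - (g (v x) - g e)" using Lv[of x] ge by (simp add: b_def)
    have E'x: "E' x = 2 * a * b - 2 * c0 * b^2 - 2 * b * (g (v x) - g e)"
      by (simp add: E'_def a_def b_def v2 power2_eq_square algebra_simps)
    have q: "\<bar>g (v x) - g e\<bar> \<le> L * \<bar>a\<bar>" using Lip[of x] by (simp add: a_def)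
    have t1: "\<bar>2 * a * b\<bar> \<le> a^2 + b^2"
    proof -
      have "0 \<le> (\<bar>a\<bar> - \<bar>b\<bar>)^2" by simp
      then have "2 * \<bar>a\<bar> * \<bar>b\<bar> \<le> \<bar>a\<bar>^2 + \<bar>b\<bar>^2" by (simp add: power2_diff)
      then show ?thesis by (simp add: abs_mult)
    qed
    have t3: "\<bar>2 * b * (g (v x) - g e)\<bar> \<le> L * (a^2 + b^2)"
    proof -
      have "\<bar>2 * b * (g (v x) - g e)\<bar> = 2 * \<bar>b\<bar> * \<bar>g (v x) - g e\<bar>" by (simp add: abs_mult)
      also have "\<dots> \<le> 2 * \<bar>b\<bar> * (L * \<bar>a\<bar>)" using q by (simp add: mult_left_mono)
      also have "\<dots> = L * \<bar>2 * a * b\<bar>" by (simp add: abs_mult algebra_simps)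
      also have "\<dots> \<le> L * (a^2 + b^2)" using t1 L by (simp add: mult_left_mono)
      finally show ?thesis .
    qed
    have t2: "\<bar>2 * c0 * b^2\<bar> \<le> 2 * \<bar>c0\<bar> * (a^2 + b^2)"
      by (simp add: abs_mult mult_left_mono)
    have "\<bar>E' x\<bar> \<le> (a^2 + b^2) + 2 * \<bar>c0\<bar> * (a^2 + b^2) + L * (a^2 + b^2)"
      unfolding E'x using t1 t2 t3 by linarith
    also have "\<dots> = K * E x" by (simp add: K_def E_def a_def b_def algebra_simps)
    finally show ?thesis .
  qed
  show ?thesis
  proof (cases "x \<ge> x0")
    case True
    define F where "F = (\<lambda>x. - (E x * exp (- K * x)))"
    have "F x0 \<le> F x"
    proof (rule DERIV_nonneg_imp_nondecreasing[OF True])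
      fix y assume "x0 \<le> y" "y \<le> x"
      have "(F has_real_derivative - (E' y * exp (- K * y) + E y * (exp (- K * y) * (- K)))) (at y)"
        unfolding F_def by (auto intro!: derivative_eq_intros DE)
      moreover have "- (E' y * exp (- K * y) + E y * (exp (- K * y) * (- K))) \<ge> 0"
      proof -
        have "E' y \<le> K * E y" using bound[of y] by linarith
        then have "(E' y - K * E y) * exp (- K * y) \<le> 0"
          by (simp add: mult_nonpos_nonneg)
        then show ?thesis by (simp add: algebra_simps)
      qed
      ultimately show "\<exists>l. (F has_real_derivative l) (at y) \<and> l \<ge> 0" by blast
    qed
    then have "E x * exp (- K * x) \<le> 0" using E0 by (simp add: F_def)
    then have "E x \<le> 0" by (simp add: mult_le_0_iff)
    then have "E x = 0" using Enn[of x] by linarith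
    then show ?thesis by (simp add: E_def add_nonneg_eq_0_iff)
  next
    case False
    then have xx: "x \<le> x0" by simp
    define F where "F = (\<lambda>x. E x * exp (K * x))"
    have "F x \<le> F x0"
    proof (rule DERIV_nonneg_imp_nondecreasing[OF xx])
      fix y assume "x \<le> y" "y \<le> x0"
      have "(F has_real_derivative (E' y * exp (K * y) + E y * (exp (K * y) * K))) (at y)"
        unfolding F_def by (auto intro!: derivative_eq_intros DE)
      moreover have "E' y * exp (K * y) + E y * (exp (K * y) * K) \<ge> 0"
      proof -
        have "E' y + K * E y \<ge> 0" using bound[of y] by linarith
        then have "(E' y + K * E y) * exp (K * y) \<ge> 0"
          by simp
        then show ?thesis by (simp add: algebra_simps)
      qed
      ultimately show "\<exists>l. (F has_real_derivative l) (at y) \<and> l \<ge> 0" by blast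
    qed
    then have "E x * exp (K * x) \<le> 0" using E0 by (simp add: F_def)
    then have "E x \<le> 0" by (simp add: mult_le_0_iff)
    then have "E x = 0" using Enn[of x] by linarith
    then show ?thesis by (simp add: E_def add_nonneg_eq_0_iff)
  qed
qed



lemma mvt01:
  fixes G G' :: "real \<Rightarrow> real"
  assumes D: "\<And>x. x \<in> {0..1} \<Longrightarrow> (G has_real_derivative G' x) (at x within {0..1})"
    and xy: "0 \<le> x" "x < y" "y \<le> 1"
  shows "\<exists>z. x < z \<and> z < y \<and> G y - G x = (y - x) * G' z"
proof -
  have cont: "continuous_on {0..1} G" using D by (rule DERIV_continuous_on)
  have Dat: "(G has_real_derivative G' z) (at z)" if "0 < z" "z < 1" for z
  proof -
    have "z \<in> interior {0..1::real}" using that by simp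
    then have "at z within {0..1} = at z" by (rule at_within_interior)
    then show ?thesis using D[of z] that by simp
  qed
  have "\<exists>l z. x < z \<and> z < y \<and> DERIV G z :> l \<and> G y - G x = (y - x) * l"
  proof (rule MVT)
    show "x < y" by fact
    show "continuous_on {x..y} G" using cont by (rule continuous_on_subset) (use xy in auto)
    show "\<And>z. x < z \<Longrightarrow> z < y \<Longrightarrow> G differentiable at z"
      using Dat xy real_differentiable_def by (meson le_less_trans less_le_trans)
  qed
  then obtain l z where z: "x < z" "z < y" "DERIV G z :> l" "G y - G x = (y - x) * l" by blast
  have "l = G' z" using DERIV_unique[OF z(3) Dat] z xy by auto
  then show ?thesis using z by blast
qed

lemma g_props:
  fixes f0 f0' :: "real \<Rightarrow> real"
  assumes D0: "\<And>x. x \<in> {0..1} \<Longrightarrow> (f0 has_real_derivative f0' x) (at x within {0..1})"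
    and C0: "continuous_on {0..1} f0'"
    and a0: "f0 0 > 1" and a1: "f0 1 = 0" and d1: "f0' 1 > -1"
  defines "g \<equiv> (\<lambda>u. u * (1 - u - f0 u))"
  shows "\<exists>\<delta>. 0 < \<delta> \<and> \<delta> < 1/2 \<and> (\<forall>x y. 0 \<le> x \<and> x < y \<and> y \<le> \<delta> \<longrightarrow> g y < g x)
            \<and> (\<forall>x y. 1 - \<delta> \<le> x \<and> x < y \<and> y \<le> 1 \<longrightarrow> g y < g x)"
    and "\<exists>L\<ge>0. \<forall>x\<in>{0..1}. \<forall>y\<in>{0..1}. \<bar>g x - g y\<bar> \<le> L * \<bar>x - y\<bar>"
proof -
  define g' where "g' = (\<lambda>u. 1 - 2 * u - f0 u - u * f0' u)"
  have Dg: "(g has_real_derivative g' x) (at x within {0..1})" if "x \<in> {0..1}" for x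
    unfolding g_def g'_def using D0[OF that]
    by (auto intro!: derivative_eq_intros simp: algebra_simps)
  have cf0: "continuous_on {0..1} f0" using D0 by (rule DERIV_continuous_on)
  have cg': "continuous_on {0..1} g'" unfolding g'_def
    by (intro continuous_intros cf0 C0)
  have g'0: "g' 0 < 0" using a0 by (simp add: g'_def)
  have g'1: "g' 1 < 0" using a1 d1 by (simp add: g'_def)
  obtain d1 where d1: "d1 > 0" "\<And>x. x \<in> {0..1} \<Longrightarrow> dist x 0 < d1 \<Longrightarrow> dist (g' x) (g' 0) < - g' 0"
    using cg' g'0 unfolding continuous_on_iff by (metis atLeastAtMost_iff neg_0_less_iff_less order.refl zero_le_one)
  obtain d2 where d2: "d2 > 0" "\<And>x. x \<in> {0..1} \<Longrightarrow> dist x 1 < d2 \<Longrightarrow> dist (g' x) (g' 1) < - g' 1"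
    using cg' g'1 unfolding continuous_on_iff by (metis atLeastAtMost_iff neg_0_less_iff_less order.refl zero_le_one)
  define \<delta> where "\<delta> = min (min d1 d2) (1/2) / 2"
  have \<delta>: "0 < \<delta>" "\<delta> < 1/2" "\<delta> < d1" "\<delta> < d2" using d1 d2 by (auto simp: \<delta>_def)
  have neg0: "g' z < 0" if "0 \<le> z" "z < \<delta>" for z
    using d1(2)[of z] that \<delta> by (auto simp: dist_real_def)
  have neg1: "g' z < 0" if "1 - \<delta> < z" "z \<le> 1" for z
    using d2(2)[of z] that \<delta> by (auto simp: dist_real_def)
  show "\<exists>\<delta>. 0 < \<delta> \<and> \<delta> < 1/2 \<and> (\<forall>x y. 0 \<le> x \<and> x < y \<and> y \<le> \<delta> \<longrightarrow> g y < g x)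
            \<and> (\<forall>x y. 1 - \<delta> \<le> x \<and> x < y \<and> y \<le> 1 \<longrightarrow> g y < g x)"
  proof (intro exI conjI allI impI)
    fix x y assume xy: "0 \<le> x \<and> x < y \<and> y \<le> \<delta>"
    then obtain z where z: "x < z" "z < y" "g y - g x = (y - x) * g' z"
      using mvt01[OF Dg, of x y] \<delta> by auto
    have "g' z < 0" using neg0[of z] z xy by auto
    then have "(y - x) * g' z < 0" using xy by (simp add: mult_pos_neg)
    then show "g y < g x" using z by simp
  next
    fix x y assume xy: "1 - \<delta> \<le> x \<and> x < y \<and> y \<le> 1"
    then obtain z where z: "x < z" "z < y" "g y - g x = (y - x) * g' z"
      using mvt01[OF Dg, of x y] \<delta> by auto
    have "g' z < 0" using neg1[of z] z xy by auto
    then have "(y - x) * g' z < 0" using xy by (simp add: mult_pos_neg)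
    then show "g y < g x" using z by simp
  qed (use \<delta> in auto)
  obtain m where m: "m \<in> {0..1}" "\<And>y. y \<in> {0..1} \<Longrightarrow> \<bar>g' y\<bar> \<le> \<bar>g' m\<bar>"
  proof -
    have "continuous_on {0..1} (\<lambda>x. \<bar>g' x\<bar>)" using cg' by (intro continuous_intros)
    then show ?thesis using continuous_attains_sup[of "{0..1::real}" "\<lambda>x. \<bar>g' x\<bar>"] that by auto
  qed
  show "\<exists>L\<ge>0. \<forall>x\<in>{0..1}. \<forall>y\<in>{0..1}. \<bar>g x - g y\<bar> \<le> L * \<bar>x - y\<bar>"
  proof (intro exI[of _ "\<bar>g' m\<bar>"] conjI ballI)
    fix x y :: real assume x: "x \<in> {0..1}" and y: "y \<in> {0..1}"
    have key: "\<bar>g b - g a\<bar> \<le> \<bar>g' m\<bar> * \<bar>b - a\<bar>" if ab: "a \<in> {0..1}" "b \<in> {0..1}" "a < b" for a b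
    proof -
      obtain z where z: "a < z" "z < b" "g b - g a = (b - a) * g' z"
        using mvt01[OF Dg, of a b] ab by auto
      have "\<bar>g b - g a\<bar> = \<bar>b - a\<bar> * \<bar>g' z\<bar>" using z by (simp add: abs_mult)
      also have "\<dots> \<le> \<bar>b - a\<bar> * \<bar>g' m\<bar>" using m(2)[of z] z ab by (intro mult_left_mono) auto
      finally show ?thesis by (simp add: mult.commute)
    qed
    show "\<bar>g x - g y\<bar> \<le> \<bar>g' m\<bar> * \<bar>x - y\<bar>"
    proof (cases x y rule: linorder_cases)
      case less then show ?thesis using key[OF y x] x y key[of x y] by (simp add: abs_minus_commute)
    next
      case equal then show ?thesis by simp
    next
      case greater then show ?thesis using key[of y x] x y by simp
    qed
  qed simp
qed


lemma shift_top: "filterlim (\<lambda>x. x + s) at_top (at_top :: real filter)"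
  unfolding filterlim_at_top eventually_at_top_linorder
proof (intro allI) fix Z :: real show "\<exists>N. \<forall>n\<ge>N. Z \<le> n + s" by (rule exI[of _ "Z - s"]) auto qed
lemma shift_bot: "filterlim (\<lambda>x. x + s) at_bot (at_bot :: real filter)"
  unfolding filterlim_at_bot eventually_at_bot_linorder
proof (intro allI) fix Z :: real show "\<exists>N. \<forall>n\<le>N. n + s \<le> Z" by (rule exI[of _ "Z - s"]) auto qed



lemma C2_derivs:
  assumes "C2_real w"
  shows "\<And>x. (w has_real_derivative deriv w x) (at x)"
    "\<And>x. (deriv w has_real_derivative deriv (deriv w) x) (at x)"
  using assms unfolding C2_real_def differentiable_on_def
  by (auto simp: DERIV_deriv_iff_real_differentiable)

theorem lemma4p1:
  fixes f f0 :: "real \<Rightarrow> real" and c0 \<tau> c :: real and w :: "real \<Rightarrow> real"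
  assumes "C4_bounded_derivs f" and "F1 f" and "F2 f" and "F3 f"
    and "C1_on_unit f0"
    and "\<forall>x y. 0 \<le> x \<and> x \<le> y \<and> y \<le> 1 \<longrightarrow> f0 y \<le> f0 x"
    and "\<forall>x. 0 \<le> x \<and> x \<le> 1 \<longrightarrow> f0 x \<le> f x"
    and "f0 0 > 1" and "f0 1 = 0"
    and "\<exists>!u. 0 < u \<and> u < 1 \<and> 1 - u = f0 u"
    and "\<exists>v. solves_nondelayed f0 c0 v"
    and "\<forall>c' v. solves_nondelayed f0 c' v \<longrightarrow> c' = c0"
    and "\<tau> \<ge> 0" and "c > 0"
    and "solves_P f \<tau> c w"
    and "\<forall>x y. x \<le> y \<longrightarrow> w y \<le> w x"
  shows "c \<le> c0"
proof (rule ccontr)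
  assume "\<not> c \<le> c0"
  then have cc0: "c0 < c" by simp
  note mono0 = assms(6) and f0f = assms(7) and wmono = assms(16)
  obtain f0' where D0: "\<And>x. x \<in> {0..1} \<Longrightarrow> (f0 has_real_derivative f0' x) (at x within {0..1})"
    and C0: "continuous_on {0..1} f0'"
    using assms(5) unfolding C1_on_unit_def by blast
  have Df1: "(f has_real_derivative deriv f 1) (at 1)"
  proof -
    have "((deriv ^^ 0) f) differentiable_on UNIV" using assms(1) unfolding C4_bounded_derivs_def by (metis zero_less_numeral)
    then show ?thesis unfolding differentiable_on_def by (simp add: DERIV_deriv_iff_real_differentiable)
  qed
  have f0'1: "f0' 1 > -1"
  proof -
    have "deriv f 1 > -1" using assms(2) unfolding F1_def by blast
    moreover have "deriv f 1 \<le> f0' 1"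
    proof (rule ccontr)
      assume "\<not> deriv f 1 \<le> f0' 1"
      then have pos: "deriv f 1 - f0' 1 > 0" by simp
      have "((\<lambda>x. f x - f0 x) has_real_derivative (deriv f 1 - f0' 1)) (at 1 within {0..1})"
        using D0[of 1] has_field_derivative_at_within[OF Df1] by (intro derivative_intros) auto
      from has_real_derivative_pos_inc_left[OF this pos] obtain d where d: "d > 0"
        "\<And>h. h > 0 \<Longrightarrow> 1 - h \<in> {0..1} \<Longrightarrow> h < d \<Longrightarrow> f (1 - h) - f0 (1 - h) < f 1 - f0 1" by blast
      define h where "h = min d 1 / 2"
      have h: "h > 0" "h < d" "1 - h \<in> {0..1}" using d by (auto simp: h_def)
      have "f 1 = 0" using assms(2) unfolding F1_def by blast
      then have "f (1 - h) < f0 (1 - h)" using d(2)[OF h(1) h(3) h(2)] assms(9) by simp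
      moreover have "f0 (1 - h) \<le> f (1 - h)" using f0f h by auto
      ultimately show False by simp
    qed
    ultimately show ?thesis by simp
  qed
  define g where "g = (\<lambda>u. u * (1 - u - f0 u))"
  obtain \<delta> where \<delta>: "0 < \<delta>" "\<delta> < 1/2"
    and z0: "\<And>x y. 0 \<le> x \<Longrightarrow> x < y \<Longrightarrow> y \<le> \<delta> \<Longrightarrow> g y < g x"
    and z1: "\<And>x y. 1 - \<delta> \<le> x \<Longrightarrow> x < y \<Longrightarrow> y \<le> 1 \<Longrightarrow> g y < g x"
    using g_props(1)[OF D0 C0 assms(8,9) f0'1] unfolding g_def by blast
  obtain L where L: "L \<ge> 0" "\<And>x y. x \<in> {0..1} \<Longrightarrow> y \<in> {0..1} \<Longrightarrow> \<bar>g x - g y\<bar> \<le> L * \<bar>x - y\<bar>"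
    using g_props(2)[OF D0 C0 assms(8,9) f0'1] unfolding g_def by blast
  obtain v where v: "solves_nondelayed f0 c0 v" using assms(11) by blast
  have vC2: "C2_real v" and v01: "\<And>x. 0 \<le> v x \<and> v x \<le> 1"
    and veq: "\<And>x. deriv (deriv v) x + c0 * deriv v x + v x * (1 - v x - f0 (v x)) = 0"
    and vbot: "(v \<longlongrightarrow> 1) at_bot" and vtop: "(v \<longlongrightarrow> 0) at_top"
    using v unfolding solves_nondelayed_def by auto
  have wC2: "C2_real w"
    and weq: "\<And>x. deriv (deriv w) x + c * deriv w x + w x * (1 - w x - f (w (x + c * \<tau>))) = 0"
    and wbot: "(w \<longlongrightarrow> 1) at_bot" and wtop: "(w \<longlongrightarrow> 0) at_top"
    using assms(15) unfolding solves_P_def by auto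
  define v1 where "v1 = deriv v"
  define v2 where "v2 = deriv (deriv v)"
  define w1 where "w1 = deriv w"
  define w2 where "w2 = deriv (deriv w)"
  have Dv: "\<And>x. (v has_real_derivative v1 x) (at x)" "\<And>x. (v1 has_real_derivative v2 x) (at x)"
    using C2_derivs[OF vC2] by (auto simp: v1_def v2_def)
  have Dw: "\<And>x. (w has_real_derivative w1 x) (at x)" "\<And>x. (w1 has_real_derivative w2 x) (at x)"
    using C2_derivs[OF wC2] by (auto simp: w1_def w2_def)
  have Lv: "\<And>x. v2 x + c0 * v1 x + g (v x) = 0"
    using veq by (simp add: v1_def v2_def g_def)
  have w01: "0 \<le> w x \<and> w x \<le> 1" for x
  proof
    have "\<forall>\<^sub>F y in at_top. w y \<le> w x"
      unfolding eventually_at_top_linorder using wmono by blast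
    then show "0 \<le> w x" using tendsto_upperbound[OF wtop] by auto
    have "\<forall>\<^sub>F y in at_bot. w x \<le> w y"
      unfolding eventually_at_bot_linorder using wmono by blast
    then show "w x \<le> 1" using tendsto_lowerbound[OF wbot] by auto
  qed
  have w1neg: "w1 x \<le> 0" for x
  proof -
    have "mono_on UNIV (\<lambda>x. - w x)" unfolding mono_on_def using wmono by auto
    moreover have "((\<lambda>x. - w x) has_real_derivative - w1 x) (at x)" using Dw(1) by (intro derivative_intros)
    ultimately have "- w1 x \<ge> 0" by (rule mono_on_imp_deriv_nonneg) auto
    then show ?thesis by simp
  qed
  define R where "R = (\<lambda>x. w x * (f (w (x + c * \<tau>)) - f0 (w x)))"
  have Rnn: "R x \<ge> 0" for x
  proof -
    have "w (x + c * \<tau>) \<le> w x" using wmono assms(13,14) by simp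
    then have "f0 (w x) \<le> f0 (w (x + c * \<tau>))" using mono0 w01 by blast
    also have "\<dots> \<le> f (w (x + c * \<tau>))" using f0f w01 by blast
    finally show ?thesis using w01[of x] by (simp add: R_def)
  qed
  have weqR: "w2 x + c * w1 x + g (w x) = R x" for x
    using weq[of x] by (simp add: w1_def w2_def g_def R_def algebra_simps)
  have Lw: "w2 x + c0 * w1 x + g (w x) \<ge> 0" for x
  proof -
    have "(c - c0) * w1 x \<le> 0" using cc0 w1neg[of x] by (simp add: mult_nonneg_nonpos)
    then show ?thesis using weqR[of x] Rnn[of x] by (simp add: algebra_simps)
  qed
  have Dws: "\<And>x. ((\<lambda>x. w (x + s)) has_real_derivative w1 (x + s)) (at x)"
    "\<And>x. ((\<lambda>x. w1 (x + s)) has_real_derivative w2 (x + s)) (at x)" for s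
    using Dw DERIV_shift by blast+
  have order_from: "\<forall>x. w (x + s) \<le> v x"
    if ab: "a \<le> b" and mid: "\<And>x. a \<le> x \<Longrightarrow> x \<le> b \<Longrightarrow> w (x + s) \<le> v x"
      and rt: "\<And>x. x \<ge> b \<Longrightarrow> w (x + s) \<le> \<delta>" and lt: "\<And>x. x \<le> a \<Longrightarrow> v x \<ge> 1 - \<delta>"
    for s a b
  proof
    fix x
    have limt: "((\<lambda>x. w (x + s) - v x) \<longlongrightarrow> 0) at_top"
    proof -
      have "((\<lambda>x. w (x + s)) \<longlongrightarrow> 0) at_top"
        using filterlim_compose[OF wtop shift_top] by simp
      then show ?thesis using tendsto_diff[OF _ vtop] by fastforce
    qed
    have limb: "((\<lambda>x. w (x + s) - v x) \<longlongrightarrow> 0) at_bot"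
    proof -
      have "((\<lambda>x. w (x + s)) \<longlongrightarrow> 1) at_bot"
        using filterlim_compose[OF wbot shift_bot] by simp
      then show ?thesis using tendsto_diff[OF _ vbot] by fastforce
    qed
    have R: "w (y + s) \<le> v y" if "y \<ge> b" for y
    proof (rule MP_right[OF Dws(1)[of s] Dws(2)[of s] Dv Lw Lv _ limt _ that])
      show "w (b + s) \<le> v b" using mid ab by auto
      fix x assume "b \<le> x" "v x < w (x + s)"
      then show "g (w (x + s)) < g (v x)" using rt[of x] v01[of x] by (intro z0) auto
    qed
    have Lf: "w (y + s) \<le> v y" if "y \<le> a" for y
    proof (rule MP_left[OF Dws(1)[of s] Dws(2)[of s] Dv Lw Lv _ limb _ that])
      show "w (a + s) \<le> v a" using mid ab by auto
      fix x assume "x \<le> a" "v x < w (x + s)"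
      then show "g (w (x + s)) < g (v x)" using lt[of x] w01[of "x + s"] by (intro z1) auto
    qed
    show "w (x + s) \<le> v x"
      using R Lf mid by (cases "x \<le> a"; cases "x \<ge> b") auto
  qed
  define S where "S = {s. \<forall>x. w (x + s) \<le> v x}"
  obtain A where A: "\<And>x. x \<ge> A \<Longrightarrow> w x \<le> \<delta>"
  proof -
    have "\<forall>\<^sub>F x in at_top. w x < \<delta>" using order_tendstoD(2)[OF wtop \<delta>(1)] .
    then show ?thesis using that unfolding eventually_at_top_linorder by (meson less_imp_le)
  qed
  obtain B where B: "\<And>x. x \<le> B \<Longrightarrow> v x \<ge> 1 - \<delta>"
  proof -
    have "\<forall>\<^sub>F x in at_bot. v x > 1 - \<delta>" using order_tendstoD(1)[OF vbot] \<delta> by simp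
    then show ?thesis using that unfolding eventually_at_bot_linorder by (meson less_imp_le)
  qed
  have Sne: "A - B \<in> S"
    unfolding S_def mem_Collect_eq
  proof (rule order_from[of B B])
    fix x assume "B \<le> x" "x \<le> B"
    then have "x = B" by simp
    then show "w (x + (A - B)) \<le> v x" using A[of A] B[of B] \<delta> by simp
  next
    fix x assume "x \<ge> B" then show "w (x + (A - B)) \<le> \<delta>" using A by simp
  qed (use B in auto)
  obtain x1 where x1: "v x1 < 1/2"
  proof -
    have "\<forall>\<^sub>F x in at_top. v x < 1/2" using order_tendstoD(2)[OF vtop, of "1/2"] by simp
    then show ?thesis using that unfolding eventually_at_top_linorder by blast
  qed
  obtain y1 where y1: "w y1 > 1/2"
  proof -
    have "\<forall>\<^sub>F x in at_bot. w x > 1/2" using order_tendstoD(1)[OF wbot, of "1/2"] by simp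
    then show ?thesis using that unfolding eventually_at_bot_linorder by blast
  qed
  have Slow: "s > y1 - x1" if "s \<in> S" for s
  proof (rule ccontr)
    assume "\<not> s > y1 - x1"
    then have "x1 + s \<le> y1" by simp
    then have "w y1 \<le> w (x1 + s)" using wmono by blast
    moreover have "w (x1 + s) \<le> v x1" using that by (simp add: S_def)
    ultimately show False using x1 y1 by simp
  qed
  have bdd: "bdd_below S" unfolding bdd_below_def using Slow by (meson less_imp_le)
  define s0 where "s0 = Inf S"
  have Sup: "s' \<in> S" if "s \<in> S" "s \<le> s'" for s s'
    using that wmono unfolding S_def by (smt (verit) mem_Collect_eq)
  have s0S: "s0 \<in> S"
    unfolding S_def
  proof (intro CollectI allI)
    fix x
    have ev: "\<forall>\<^sub>F s in at_right s0. w (x + s) \<le> v x"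
    proof -
      have "\<forall>\<^sub>F s in at_right s0. s0 < s" by (rule eventually_at_right_less)
      moreover have "w (x + s) \<le> v x" if lt0: "s0 < s" for s
      proof -
        have "S \<noteq> {}" using Sne by auto
        then obtain s' where "s' \<in> S" "s' < s" using cInf_less_iff[of S s] lt0 bdd by (auto simp: s0_def)
        then have "s \<in> S" using Sup by auto
        then show ?thesis by (simp add: S_def)
      qed
      ultimately show ?thesis by (auto elim: eventually_mono)
    qed
    have "isCont w (x + s0)" using Dw(1) DERIV_isCont by blast
    then have "((\<lambda>s. w (x + s)) \<longlongrightarrow> w (x + s0)) (at s0)"
      by (intro isCont_tendsto_compose[where g=w]) (auto intro!: tendsto_intros)
    then have "((\<lambda>s. w (x + s)) \<longlongrightarrow> w (x + s0)) (at_right s0)"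
      by (rule filterlim_mono) (auto simp: at_le)
    from tendsto_upperbound[OF this ev] show "w (x + s0) \<le> v x" by simp
  qed
  have s0le: "\<And>s. s \<in> S \<Longrightarrow> s0 \<le> s" using bdd by (auto simp: s0_def intro: cInf_lower)
  have s0x: "\<And>x. w (x + s0) \<le> v x" using s0S by (simp add: S_def)
  show False
  proof (cases "\<exists>x0. w (x0 + s0) = v x0")
    case True
    then obtain x0 where x0: "w (x0 + s0) = v x0" by blast
    define y0 where "y0 = x0 + s0"
    have Dd: "\<And>x. ((\<lambda>x. w (x + s0) - v x) has_real_derivative (w1 (x + s0) - v1 x)) (at x)"
      using Dws(1)[of s0] Dv(1) by (intro derivative_intros) auto
    have Dd1: "\<And>x. ((\<lambda>x. w1 (x + s0) - v1 x) has_real_derivative (w2 (x + s0) - v2 x)) (at x)"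
      using Dws(2)[of s0] Dv(2) by (intro derivative_intros) auto
    have "(\<lambda>x. w1 (x + s0) - v1 x) x0 = 0 \<and> w2 (x0 + s0) - v2 x0 \<le> 0"
      by (rule max_second[OF Dd Dd1, of 1]) (use x0 s0x in auto)
    then have p: "w1 y0 = v1 x0" and q: "w2 y0 \<le> v2 x0" by (auto simp: y0_def)
    have geq: "g (w y0) = g (v x0)" using x0 by (simp add: y0_def)
    have diff: "v2 x0 - w2 y0 = (c - c0) * w1 y0 - R y0"
      using weqR[of y0] Lv[of x0] geq p by (simp add: algebra_simps)
    have "(c - c0) * w1 y0 \<ge> 0" using diff q Rnn[of y0] by linarith
    then have "w1 y0 \<ge> 0" using cc0 by (simp add: zero_le_mult_iff)
    then have w1z: "w1 y0 = 0" using w1neg[of y0] by simp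
    have "w2 y0 = 0"
      using DERIV_local_max[OF Dw(2)[of y0], of 1] w1z w1neg by auto
    then have "v2 x0 = 0" using diff w1z q Rnn[of y0] by simp
    then have gz: "g (v x0) = 0" using Lv[of x0] p w1z by simp
    have const: "v x = v x0" for x
    proof (rule ode_const[OF Dv Lv _ L(1) gz])
      show "\<And>x. \<bar>g (v x) - g (v x0)\<bar> \<le> L * \<bar>v x - v x0\<bar>" using L(2) v01 by auto
      show "v x0 = v x0" "v1 x0 = 0" using p w1z by auto
    qed
    have veq': "v = (\<lambda>x. v x0)" using const by (intro ext) blast
    have "((\<lambda>x::real. v x0) \<longlongrightarrow> 1) at_bot" using vbot by (subst (asm) veq')
    then have "v x0 = 1" by (simp add: tendsto_const_iff)
    moreover have "((\<lambda>x::real. v x0) \<longlongrightarrow> 0) at_top" using vtop by (subst (asm) veq')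
    then have "v x0 = 0" by (simp add: tendsto_const_iff)
    ultimately show False by simp
  next
    case False
    have lt: "w (x + s0) < v x" for x using s0x[of x] False by (auto simp: le_less)
    define A1 where "A1 = A - s0 + 1"
    have A1: "w (x + s0 - 1) \<le> \<delta>" if "x \<ge> A1" for x
      by (rule A) (use that in \<open>simp add: A1_def\<close>)
    define a where "a = min A1 B"
    define b where "b = max A1 B"
    have ab: "a \<le> b" by (simp add: a_def b_def)
    have contd: "continuous_on {a..b} (\<lambda>x. v x - w (x + s0))"
    proof (rule continuous_at_imp_continuous_on, intro ballI)
      fix x
      have "isCont v x" using Dv(1) DERIV_isCont by blast
      moreover have "isCont (\<lambda>x. w (x + s0)) x" using Dws(1) DERIV_isCont by blast
      ultimately show "isCont (\<lambda>x. v x - w (x + s0)) x" by (intro continuous_intros)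
    qed
    obtain m where m: "m \<in> {a..b}" "\<And>y. y \<in> {a..b} \<Longrightarrow> v m - w (m + s0) \<le> v y - w (y + s0)"
      using continuous_attains_inf[OF compact_Icc _ contd] ab by auto
    define \<eta> where "\<eta> = v m - w (m + s0)"
    have \<eta>: "\<eta> > 0" using lt[of m] by (simp add: \<eta>_def)
    have "continuous_on {a + s0 - 1..b + s0} w"
      by (rule continuous_at_imp_continuous_on) (use Dw(1) DERIV_isCont in blast)
    then have "uniformly_continuous_on {a + s0 - 1..b + s0} w"
      by (rule compact_uniformly_continuous) simp
    then obtain d where d: "d > 0"
      "\<And>x x'. x \<in> {a + s0 - 1..b + s0} \<Longrightarrow> x' \<in> {a + s0 - 1..b + s0} \<Longrightarrow> dist x' x < d \<Longrightarrow> dist (w x') (w x) < \<eta>"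
      unfolding uniformly_continuous_on_def using \<eta> by blast
    define \<epsilon> where "\<epsilon> = min (d/2) 1"
    have \<epsilon>: "\<epsilon> > 0" "\<epsilon> \<le> 1" "\<epsilon> < d" using d by (auto simp: \<epsilon>_def)
    have "s0 - \<epsilon> \<in> S"
      unfolding S_def mem_Collect_eq
    proof (rule order_from[OF ab])
      fix x assume x: "a \<le> x" "x \<le> b"
      have "dist (w (x + (s0 - \<epsilon>))) (w (x + s0)) < \<eta>"
        by (rule d(2)) (use x \<epsilon> in \<open>auto simp: dist_real_def\<close>)
      moreover have "\<eta> \<le> v x - w (x + s0)" using m(2)[of x] x by (simp add: \<eta>_def)
      ultimately show "w (x + (s0 - \<epsilon>)) \<le> v x" by (simp add: dist_real_def)
    next
      fix x assume x: "b \<le> x"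
      have "w (x + (s0 - \<epsilon>)) \<le> w (x + s0 - 1)" using wmono \<epsilon> by simp
      also have "\<dots> \<le> \<delta>" using A1[of x] x by (simp add: b_def)
      finally show "w (x + (s0 - \<epsilon>)) \<le> \<delta>" .
    next
      fix x assume "x \<le> a" then show "1 - \<delta> \<le> v x" using B by (simp add: a_def)
    qed
    then have "s0 \<le> s0 - \<epsilon>" by (rule s0le)
    then show False using \<epsilon> by simp
  qed
qed


end
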